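(* Let $X$ be a metric continuum with metric $\rho\le 1$, and let $a,b,c\subset X$ be nonempty closed sets with $a\cap b\cap c=\emptyset$. Define $f:X\to\mathbb{R}^3$ by $f(p)=(\kappa_a(p),\kappa_b(p),\kappa_c(p))$ with $\kappa_a(p)=\rho(p,a)/(\rho(p,a)+\rho(p,b)+\rho(p,c))$ and $\kappa_b,\kappa_c$ analogous. Let $T=\{(t_1,t_2,t_3):t_i\ge0,\ t_1+t_2+t_3=1\}$, $\partial T$ its boundary (relative to the plane $t_1+t_2+t_3=1$), and $h:\partial T\times[0,1]\to T$, $h(v,t)=(1-t)v+t(\tfrac13,\tfrac13,\tfrac13)$. Let $X'=\{(p,v,t)\in X\times\partial T\times[0,1]: h(v,t)=f(p)\}$ and $q:X'\to X$, $q(p,v,t)=p$. Let $A$, $B$, $C$ be the sides of $T$ opposite to $(1,0,0)$, $(0,1,0)$, $(0,0,1)$ respectively, and put $x=X'\cap(X\times A\times[0,1])$, $y=X'\cap(X\times B\times[0,1])$, $z=X'\cap(X\times C\times[0,1])$. Then $X'$ is a metric continuum, $q$ is a continuous closed monotone surjection (all fibres are connected), and $q^{-1}(a)\subset x$, $q^{-1}(b)\subset y$, $q^{-1}(c)\subset z$, $x\cap y\cap z=\emptyset$ and $x\cup y\cup z=X'$.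
   Context: A metric continuum is a compact connected metric space. $\rho(p,a)$ denotes the distance from the point $p$ to the set $a$. A map is monotone if all its point-inverses are connected. *)

theory Defs
  imports "HOL-Analysis.Analysis"
begin

definition kappa :: "'a::metric_space set \<Rightarrow> 'a set \<Rightarrow> 'a set \<Rightarrow> 'a set \<Rightarrow> 'a \<Rightarrow> real" where
  "kappa d a b c p = infdist p d / (infdist p a + infdist p b + infdist p c)"

definition fmap :: "'a::metric_space set \<Rightarrow> 'a set \<Rightarrow> 'a set \<Rightarrow> 'a \<Rightarrow> real \<times> real \<times> real" where
  "fmap a b c p = (kappa a a b c p, kappa b a b c p, kappa c a b c p)"

definition simplexT :: "(real \<times> real \<times> real) set" where
  "simplexT = {(t1, t2, t3). t1 \<ge> 0 \<and> t2 \<ge> 0 \<and> t3 \<ge> 0 \<and> t1 + t2 + t3 = 1}"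

definition hmap :: "real \<times> real \<times> real \<Rightarrow> real \<Rightarrow> real \<times> real \<times> real" where
  "hmap v t = (1 - t) *\<^sub>R v + t *\<^sub>R (1/3, 1/3, 1/3)"

definition Xprime :: "'a::metric_space set \<Rightarrow> 'a set \<Rightarrow> 'a set \<Rightarrow> 'a set
    \<Rightarrow> ('a \<times> (real \<times> real \<times> real) \<times> real) set" where
  "Xprime X a b c = {(p, v, t). p \<in> X \<and> v \<in> rel_frontier simplexT \<and> t \<in> {0..1}
       \<and> hmap v t = fmap a b c p}"

definition sideA :: "(real \<times> real \<times> real) set" where
  "sideA = closed_segment (0, 1, 0) (0, 0, 1)"
definition sideB :: "(real \<times> real \<times> real) set" where
  "sideB = closed_segment (1, 0, 0) (0, 0, 1)"
definition sideC :: "(real \<times> real \<times> real) set" where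
  "sideC = closed_segment (1, 0, 0) (0, 1, 0)"

end

theory Submission
  imports Defs
begin

lemma simplexT_closed: "closed simplexT"
proof -
  have "simplexT = {x. fst x \<ge> 0} \<inter> {x. fst (snd x) \<ge> 0} \<inter> {x. snd (snd x) \<ge> 0}
     \<inter> {x. fst x + fst (snd x) + snd (snd x) = 1}"
    by (auto simp: simplexT_def)
  moreover have "closed ({x::real\<times>real\<times>real. fst x \<ge> 0} \<inter> {x. fst (snd x) \<ge> 0} \<inter> {x. snd (snd x) \<ge> 0}
     \<inter> {x. fst x + fst (snd x) + snd (snd x) = 1})"
    by (intro closed_Int closed_Collect_le closed_Collect_eq continuous_intros)
  ultimately show ?thesis by simp
qed

lemma aff: "affine {(t1,t2,t3). t1 + t2 + t3 = (1::real)}"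
  unfolding affine_def
proof (clarsimp)
  fix x1 x2 x3 y1 y2 y3 u v :: real
  assume "x1 + x2 + x3 = 1" "y1 + y2 + y3 = 1" "u + v = 1"
  moreover have "u * x1 + v * y1 + (u * x2 + v * y2) + (u * x3 + v * y3) = u * (x1+x2+x3) + v * (y1+y2+y3)"
    by (simp add: algebra_simps)
  ultimately show "u * x1 + v * y1 + (u * x2 + v * y2) + (u * x3 + v * y3) = 1" by simp
qed
lemma aff_simplexT: "affine hull simplexT = {(t1,t2,t3). t1 + t2 + t3 = 1}"
proof
  have "affine {(t1,t2,t3). t1 + t2 + t3 = (1::real)}"
    by (rule aff)
  then show "affine hull simplexT \<subseteq> {(t1,t2,t3). t1 + t2 + t3 = 1}"
    by (intro hull_minimal) (auto simp: simplexT_def)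
next
  have "{(1,0,0),(0,1,0),(0,0,1)} \<subseteq> simplexT" by (auto simp: simplexT_def)
  then have "affine hull {(1,0,0),(0,1,0),(0::real,0::real,1::real)} \<subseteq> affine hull simplexT"
    by (rule hull_mono)
  moreover have "{(t1,t2,t3). t1 + t2 + t3 = 1} \<subseteq> affine hull {(1,0,0),(0,1,0),(0::real,0::real,1::real)}"
    unfolding affine_hull_3 by auto
  ultimately show "{(t1,t2,t3). t1 + t2 + t3 = 1} \<subseteq> affine hull simplexT" by blast
qed

lemma relint_simplexT: "rel_interior simplexT = {(t1,t2,t3). t1 > 0 \<and> t2 > 0 \<and> t3 > 0 \<and> t1 + t2 + t3 = 1}"
proof (intro set_eqI iffI)
  fix x assume "x \<in> rel_interior simplexT"
  then obtain e where x: "x \<in> simplexT" and e: "e > 0" and sub: "ball x e \<inter> affine hull simplexT \<subseteq> simplexT"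
    by (auto simp: mem_rel_interior_ball)
  obtain x1 x2 x3 where xe: "x = (x1,x2,x3)" by (cases x) auto
  let ?d = "e/8"
  have n: "norm (a::real, b::real, c::real) \<le> \<bar>a\<bar> + \<bar>b\<bar> + \<bar>c\<bar>" for a b c
  proof -
    have "norm (a,b,c) \<le> norm a + norm (b,c)" by (rule norm_Pair_le)
    also have "norm (b,c) \<le> norm b + norm c" by (rule norm_Pair_le)
    finally show ?thesis by simp
  qed
  have d1: "(x1 - 2*?d, x2 + ?d, x3 + ?d) \<in> simplexT"
    apply (rule subsetD[OF sub]) apply (intro IntI)
    using n[of "2*?d" "-?d" "-?d"] e x xe apply (simp_all add: dist_norm aff_simplexT)
    using x xe by (auto simp: simplexT_def)
  have d2: "(x1 + ?d, x2 - 2*?d, x3 + ?d) \<in> simplexT"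
    apply (rule subsetD[OF sub]) apply (intro IntI)
    using n[of "-?d" "2*?d" "-?d"] e x xe apply (simp_all add: dist_norm aff_simplexT)
    using x xe by (auto simp: simplexT_def)
  have d3: "(x1 + ?d, x2 + ?d, x3 - 2*?d) \<in> simplexT"
    apply (rule subsetD[OF sub]) apply (intro IntI)
    using n[of "-?d" "-?d" "2*?d"] e x xe apply (simp_all add: dist_norm aff_simplexT)
    using x xe by (auto simp: simplexT_def)
  show "x \<in> {(t1,t2,t3). t1 > 0 \<and> t2 > 0 \<and> t3 > 0 \<and> t1 + t2 + t3 = 1}"
    using d1 d2 d3 x xe e by (auto simp: simplexT_def)
next
  fix x assume x: "x \<in> {(t1,t2,t3). t1 > 0 \<and> t2 > 0 \<and> t3 > 0 \<and> t1 + t2 + t3 = (1::real)}"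
  obtain x1 x2 x3 where xe: "x = (x1,x2,x3)" by (cases x) auto
  define e where "e = min x1 (min x2 x3)"
  have e: "e > 0" using x xe by (auto simp: e_def)
  have "ball x e \<inter> affine hull simplexT \<subseteq> simplexT"
  proof
    fix y assume y: "y \<in> ball x e \<inter> affine hull simplexT"
    obtain y1 y2 y3 where ye: "y = (y1,y2,y3)" by (cases y) auto
    have "dist x y < e" using y by auto
    then have "\<bar>x1 - y1\<bar> < e" "\<bar>x2 - y2\<bar> < e" "\<bar>x3 - y3\<bar> < e"
      using dist_fst_le[of x y] dist_snd_le[of x y] dist_fst_le[of "snd x" "snd y"] dist_snd_le[of "snd x" "snd y"]
      by (auto simp: xe ye dist_real_def)
    moreover have "y1 + y2 + y3 = 1" using y ye by (simp add: aff_simplexT)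
    ultimately show "y \<in> simplexT" using ye x xe by (auto simp: simplexT_def e_def)
  qed
  moreover have "x \<in> simplexT" using x xe by (auto simp: simplexT_def)
  ultimately show "x \<in> rel_interior simplexT" using e by (auto simp: mem_rel_interior_ball)
qed

lemma relfr_simplexT: "rel_frontier simplexT = {(t1,t2,t3). t1 \<ge> 0 \<and> t2 \<ge> 0 \<and> t3 \<ge> 0 \<and> t1 + t2 + t3 = 1
   \<and> (t1 = 0 \<or> t2 = 0 \<or> t3 = 0)}"
  unfolding rel_frontier_def closure_closed[OF simplexT_closed] relint_simplexT
  by (auto simp: simplexT_def)

lemma sideA_eq: "sideA = {(t1,t2,t3). t1 = 0 \<and> t2 \<ge> 0 \<and> t3 \<ge> 0 \<and> t1 + t2 + t3 = 1}"
  unfolding sideA_def closed_segment_def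
  by auto

lemma sideB_eq: "sideB = {(t1,t2,t3). t2 = 0 \<and> t1 \<ge> 0 \<and> t3 \<ge> 0 \<and> t1 + t2 + t3 = 1}"
  unfolding sideB_def closed_segment_def
  by auto

lemma sideC_eq: "sideC = {(t1,t2,t3). t3 = 0 \<and> t1 \<ge> 0 \<and> t2 \<ge> 0 \<and> t1 + t2 + t3 = 1}"
  unfolding sideC_def closed_segment_def
  by auto

lemma relfr_sides: "rel_frontier simplexT = sideA \<union> sideB \<union> sideC"
  unfolding relfr_simplexT sideA_eq sideB_eq sideC_eq by auto

lemma connected_relfr: "connected (rel_frontier simplexT)"
proof -
  have cA: "connected sideA" and cB: "connected sideB" and cC: "connected sideC"
    unfolding sideA_def sideB_def sideC_def by (rule connected_segment)+
  have "(0,0,1) \<in> sideA \<inter> sideB" unfolding sideA_def sideB_def by simp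
  then have "connected (sideA \<union> sideB)" using cA cB by (intro connected_Un) auto
  moreover have "(1,0,0) \<in> (sideA \<union> sideB) \<inter> sideC"
    unfolding sideB_def sideC_def by simp
  ultimately show ?thesis unfolding relfr_sides using cC
    by (rule_tac connected_Un) blast+
qed

lemma norm3: "norm (a::real, b::real, c::real) \<le> \<bar>a\<bar> + \<bar>b\<bar> + \<bar>c\<bar>"
proof -
  have "norm (a,b,c) \<le> norm a + norm (b,c)" by (rule norm_Pair_le)
  also have "norm (b,c) \<le> norm b + norm c" by (rule norm_Pair_le)
  finally show ?thesis by simp
qed

lemma compact_relfr: "compact (rel_frontier simplexT)"
proof (rule compact_rel_frontier_bounded)
  show "bounded simplexT"
    unfolding bounded_iff
  proof (intro exI ballI)
    fix x assume "x \<in> simplexT"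
    then obtain x1 x2 x3 where "x = (x1,x2,x3)" "x1 \<ge> 0" "x2 \<ge> 0" "x3 \<ge> 0" "x1+x2+x3 = 1"
      by (auto simp: simplexT_def)
    then show "norm x \<le> 1" using norm3[of x1 x2 x3] by simp
  qed
qed

lemma hmap_eq: "hmap (v1,v2,v3) t = ((1-t)* v1 + t/3, (1-t)* v2 + t/3, (1-t)* v3 + t/3)"
  by (simp add: hmap_def)

lemma hmap_le:
  assumes "v \<in> simplexT" "t \<le> 1" "v' \<in> rel_frontier simplexT" "hmap v t = hmap v' t'"
  shows "t \<le> t'"
proof -
  obtain v1 v2 v3 where v: "v = (v1,v2,v3)" by (cases v) auto
  obtain w1 w2 w3 where w: "v' = (w1,w2,w3)" by (cases v') auto
  have nn: "(1-t)* v1 \<ge> 0" "(1-t)* v2 \<ge> 0" "(1-t)* v3 \<ge> 0"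
    using assms(1,2) v by (auto simp: simplexT_def)
  have "w1 = 0 \<or> w2 = 0 \<or> w3 = 0" using assms(3) w by (auto simp: relfr_simplexT)
  then show ?thesis using assms(4) nn unfolding v w hmap_eq by auto
qed

lemma hmap_unique:
  assumes "v \<in> rel_frontier simplexT" "t \<in> {0..1}" "v' \<in> rel_frontier simplexT" "t' \<in> {0..1}"
    "hmap v t = hmap v' t'" "hmap v t \<noteq> (1/3,1/3,1/3)"
  shows "v = v' \<and> t = t'"
proof -
  have fs: "rel_frontier simplexT \<subseteq> simplexT" unfolding relfr_simplexT by (auto simp: simplexT_def)
  have "t \<le> t'" using hmap_le[of v t v' t'] assms fs by auto
  moreover have "t' \<le> t" using hmap_le[of v' t' v t] assms fs by auto
  ultimately have tt: "t = t'" by simp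
  have t1: "t \<noteq> 1" using assms(6) by (auto simp: hmap_def)
  obtain v1 v2 v3 where v: "v = (v1,v2,v3)" by (cases v) auto
  obtain w1 w2 w3 where w: "v' = (w1,w2,w3)" by (cases v') auto
  have "(1-t)* v1 = (1-t)* w1" "(1-t)* v2 = (1-t)* w2" "(1-t)* v3 = (1-t)* w3"
    using assms(5) unfolding v w tt hmap_eq by auto
  then have "v = v'" using t1 v w by auto
  then show ?thesis using tt by simp
qed

lemma hmap_center:
  assumes "v \<in> rel_frontier simplexT" "t \<in> {0..1}"
  shows "hmap v t = (1/3,1/3,1/3) \<longleftrightarrow> t = 1"
proof
  assume h: "hmap v t = (1/3,1/3,1/3)"
  obtain v1 v2 v3 where v: "v = (v1,v2,v3)" by (cases v) auto
  have "v1 = 0 \<or> v2 = 0 \<or> v3 = 0" using assms(1) v by (auto simp: relfr_simplexT)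
  then show "t = 1" using h unfolding v hmap_eq by auto
qed (simp add: hmap_def)

lemma hmap_surj:
  assumes "u \<in> simplexT"
  shows "\<exists>v\<in>rel_frontier simplexT. \<exists>t\<in>{0..1}. hmap v t = u"
proof (cases "u = (1/3,1/3,1/3)")
  case True
  have "(1,0,0) \<in> rel_frontier simplexT" by (simp add: relfr_simplexT)
  then show ?thesis using True by (auto simp: hmap_def intro!: bexI[of _ 1] bexI[of _ "(1,0,0)"])
next
  case False
  obtain u1 u2 u3 where u: "u = (u1,u2,u3)" by (cases u) auto
  define m where "m = min u1 (min u2 u3)"
  have mle: "m \<le> u1" "m \<le> u2" "m \<le> u3" and meq: "m = u1 \<or> m = u2 \<or> m = u3"
    by (auto simp: m_def)
  have us: "u1 \<ge> 0" "u2 \<ge> 0" "u3 \<ge> 0" "u1 + u2 + u3 = 1" using assms u by (auto simp: simplexT_def)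
  have m0: "m \<ge> 0" using us mle meq by auto
  have m3: "m < 1/3"
  proof (rule ccontr)
    assume "\<not> m < 1/3"
    then have "u1 = 1/3" "u2 = 1/3" "u3 = 1/3" using mle us by auto
    then show False using False u by simp
  qed
  define t where "t = 3*m"
  have t: "t \<in> {0..1}" "1 - t > 0" using m0 m3 by (auto simp: t_def)
  define v where "v = ((u1-m)/(1-t), (u2-m)/(1-t), (u3-m)/(1-t))"
  have "(u1-m)/(1-t) + (u2-m)/(1-t) + (u3-m)/(1-t) = (u1+u2+u3 - 3*m)/(1-t)"
    by (simp add: add_divide_distrib diff_divide_distrib)
  also have "\<dots> = 1" using us t by (simp add: t_def)
  finally have sum: "(u1-m)/(1-t) + (u2-m)/(1-t) + (u3-m)/(1-t) = 1" .
  have "v \<in> rel_frontier simplexT"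
    unfolding relfr_simplexT v_def using sum mle meq t by auto
  moreover have "hmap v t = u"
    unfolding v_def hmap_eq u using t by (simp add: t_def)
  ultimately show ?thesis using t by blast
qed



lemma denom_pos:
  assumes "a \<noteq> {}" "b \<noteq> {}" "c \<noteq> {}" "closed a" "closed b" "closed c" "a \<inter> b \<inter> c = {}"
  shows "infdist p a + infdist p b + infdist p c > 0"
proof (rule ccontr)
  assume "\<not> ?thesis"
  then have "infdist p a = 0" "infdist p b = 0" "infdist p c = 0"
    using infdist_nonneg[of p a] infdist_nonneg[of p b] infdist_nonneg[of p c] by linarith+
  then have "p \<in> a" "p \<in> b" "p \<in> c"
    using in_closure_iff_infdist_zero[of a p] in_closure_iff_infdist_zero[of b p]
      in_closure_iff_infdist_zero[of c p] assms closure_closed by auto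
  then show False using assms(7) by blast
qed

lemma fmap_in:
  assumes "infdist p a + infdist p b + infdist p c > 0"
  shows "fmap a b c p \<in> simplexT"
proof -
  let ?D = "infdist p a + infdist p b + infdist p c"
  have "infdist p a / ?D + infdist p b / ?D + infdist p c / ?D = ?D / ?D"
    by (simp only: add_divide_distrib)
  also have "\<dots> = 1" using assms by simp
  finally show ?thesis using assms
    by (simp add: fmap_def kappa_def simplexT_def infdist_nonneg)
qed

lemma cfst: "continuous_on S (fst :: 'a::topological_space \<times> 'b::topological_space \<Rightarrow> 'a)"
  using continuous_on_fst[OF continuous_on_id, of S] by (simp add: id_def)

theorem mainTheorem6:
  fixes X a b c :: "'a::metric_space set"
  assumes "compact X" and "connected X" and "X \<noteq> {}"
    and "\<forall>p\<in>X. \<forall>p'\<in>X. dist p p' \<le> 1"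
    and "a \<subseteq> X" and "b \<subseteq> X" and "c \<subseteq> X"
    and "a \<noteq> {}" and "b \<noteq> {}" and "c \<noteq> {}"
    and "closed a" and "closed b" and "closed c"
    and "a \<inter> b \<inter> c = {}"
  shows "compact (Xprime X a b c) \<and> connected (Xprime X a b c) \<and> Xprime X a b c \<noteq> {}
    \<and> continuous_on (Xprime X a b c) fst
    \<and> closed_map (top_of_set (Xprime X a b c)) (top_of_set X) fst
    \<and> fst ` Xprime X a b c = X
    \<and> (\<forall>p\<in>X. connected {w \<in> Xprime X a b c. fst w = p})
    \<and> Xprime X a b c \<inter> fst -` a \<subseteq> Xprime X a b c \<inter> (X \<times> sideA \<times> {0..1})
    \<and> Xprime X a b c \<inter> fst -` b \<subseteq> Xprime X a b c \<inter> (X \<times> sideB \<times> {0..1})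
    \<and> Xprime X a b c \<inter> fst -` c \<subseteq> Xprime X a b c \<inter> (X \<times> sideC \<times> {0..1})
    \<and> (Xprime X a b c \<inter> (X \<times> sideA \<times> {0..1})) \<inter> (Xprime X a b c \<inter> (X \<times> sideB \<times> {0..1}))
        \<inter> (Xprime X a b c \<inter> (X \<times> sideC \<times> {0..1})) = {}
    \<and> (Xprime X a b c \<inter> (X \<times> sideA \<times> {0..1})) \<union> (Xprime X a b c \<inter> (X \<times> sideB \<times> {0..1}))
        \<union> (Xprime X a b c \<inter> (X \<times> sideC \<times> {0..1})) = Xprime X a b c"
proof -
  let ?X' = "Xprime X a b c"
  have D: "\<And>p. infdist p a + infdist p b + infdist p c > 0"
    using denom_pos assms by blast
  have cf: "continuous_on UNIV (fmap a b c)"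
    unfolding fmap_def kappa_def
    using D by (intro continuous_intros) (auto simp: less_imp_neq[symmetric])
  have X'eq: "?X' = (X \<times> rel_frontier simplexT \<times> {0..1}) \<inter> {w. hmap (fst (snd w)) (snd (snd w)) = fmap a b c (fst w)}"
    by (auto simp: Xprime_def)
  have "closed {w. hmap (fst (snd w)) (snd (snd w)) = fmap a b c (fst w)}"
    unfolding hmap_def
    by (intro closed_Collect_eq continuous_intros continuous_on_compose2[OF cf]) auto
  then have cpt: "compact ?X'"
    unfolding X'eq
    by (intro compact_Int_closed compact_Times assms(1) compact_relfr compact_Icc)
  have surj: "fst ` ?X' = X"
  proof
    show "fst ` ?X' \<subseteq> X" by (auto simp: Xprime_def)
  next
    show "X \<subseteq> fst ` ?X'"
    proof
      fix p assume p: "p \<in> X"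
      obtain v t where "v \<in> rel_frontier simplexT" "t \<in> {0..1}" "hmap v t = fmap a b c p"
        using hmap_surj[OF fmap_in[OF D]] by blast
      then have "(p, v, t) \<in> ?X'" using p by (auto simp: Xprime_def)
      then show "p \<in> fst ` ?X'" by force
    qed
  qed
  have fib: "connected {w \<in> ?X'. fst w = p}" if p: "p \<in> X" for p
  proof (cases "fmap a b c p = (1/3,1/3,1/3)")
    case True
    have "{w \<in> ?X'. fst w = p} = {p} \<times> (rel_frontier simplexT \<times> {1::real})"
    proof (intro set_eqI iffI)
      fix w assume w: "w \<in> {w \<in> ?X'. fst w = p}"
      obtain p' v t where we: "w = (p', v, t)" by (cases w) auto
      have "p' = p" "v \<in> rel_frontier simplexT" "t \<in> {0..1}" "hmap v t = fmap a b c p"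
        using w unfolding we Xprime_def by auto
      moreover have "t = 1" using hmap_center[of v t] calculation True by simp
      ultimately show "w \<in> {p} \<times> (rel_frontier simplexT \<times> {1::real})" using we by simp
    next
      fix w assume w: "w \<in> {p} \<times> (rel_frontier simplexT \<times> {1::real})"
      then obtain v where we: "w = (p, v, 1)" and v: "v \<in> rel_frontier simplexT" by auto
      have "hmap v 1 = fmap a b c p" using True by (simp add: hmap_def)
      then show "w \<in> {w \<in> ?X'. fst w = p}" using we v p unfolding Xprime_def by simp
    qed
    moreover have "connected ({p} \<times> (rel_frontier simplexT \<times> {1::real}))"
      by (intro connected_Times connected_sing connected_relfr)
    ultimately show ?thesis by simp
  next
    case False
    have "w = w'" if w: "w \<in> {w \<in> ?X'. fst w = p}" and w': "w' \<in> {w \<in> ?X'. fst w = p}" for w w'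
    proof -
      obtain p1 v t where we: "w = (p1, v, t)" by (cases w) auto
      obtain p2 v' t' where we': "w' = (p2, v', t')" by (cases w') auto
      have h: "p1 = p" "v \<in> rel_frontier simplexT" "t \<in> {0..1}" "hmap v t = fmap a b c p"
        using w unfolding we Xprime_def by auto
      have h': "p2 = p" "v' \<in> rel_frontier simplexT" "t' \<in> {0..1}" "hmap v' t' = fmap a b c p"
        using w' unfolding we' Xprime_def by auto
      have "v = v' \<and> t = t'"
        using hmap_unique[OF h(2,3) h'(2,3)] h(4) h'(4) False by simp
      then show ?thesis using we we' h(1) h'(1) by simp
    qed
    note uq = this
    show ?thesis
    proof (cases "{w \<in> ?X'. fst w = p} = {}")
      case True
      then show ?thesis by (simp only: connected_empty)
    next
      case False
      then obtain x where x: "x \<in> {w \<in> ?X'. fst w = p}" by blast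
      have "{w \<in> ?X'. fst w = p} = {x}"
      proof (intro set_eqI iffI)
        fix y assume "y \<in> {w \<in> ?X'. fst w = p}"
        then show "y \<in> {x}" using uq[OF _ x] by blast
      qed (use x in blast)
      then show ?thesis by (simp only: connected_sing)
    qed
  qed
  have conn: "connected ?X'"
  proof -
    have "connected (?X' \<inter> fst -` X)"
    proof (rule connected_closed_monotone_preimage[where T = X])
      show "continuous_on ?X' fst" by (rule cfst)
      show "fst ` ?X' = X" by (rule surj)
      show "closedin (top_of_set X) (fst ` C)" if "closedin (top_of_set ?X') C" for C
        by (rule Abstract_Topology_2.continuous_imp_closed_map[OF that _ surj cpt]) (rule cfst)
      show "connected (?X' \<inter> fst -` {y})" if "y \<in> X" for y
      proof -
        have "?X' \<inter> fst -` {y} = {w \<in> ?X'. fst w = y}" by auto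
        then show ?thesis using fib[OF that] by simp
      qed
    qed (use assms(2) in auto)
    moreover have "?X' \<inter> fst -` X = ?X'" by (auto simp: Xprime_def)
    ultimately show ?thesis by simp
  qed
  have cm: "closed_map (top_of_set ?X') (top_of_set X) fst"
    unfolding closed_map_def
  proof (intro allI impI)
    fix U assume "closedin (top_of_set ?X') U"
    then show "closedin (top_of_set X) (fst ` U)"
      by (rule Abstract_Topology_2.continuous_imp_closed_map[OF _ _ surj cpt]) (rule cfst)
  qed
  have zero: "kappa d a b c p = 0" if "p \<in> d" "closed d" for d p
  proof -
    have "infdist p d = 0" using that by simp
    then show ?thesis by (simp add: kappa_def)
  qed
  have sA: "?X' \<inter> fst -` a \<subseteq> ?X' \<inter> (X \<times> sideA \<times> {0..1})"
  proof (clarsimp)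
    fix p v1 v2 v3 t assume w: "(p, (v1,v2,v3), t) \<in> ?X'" "p \<in> a"
    have k: "kappa a a b c p = 0" using zero w(2) assms(11) by blast
    have "(1-t) * v1 \<ge> 0" "v1 \<ge> 0" "t \<in> {0..1}" "(v1,v2,v3) \<in> rel_frontier simplexT"
      using w(1) by (auto simp: Xprime_def relfr_simplexT)
    moreover have "(1-t) * v1 + t/3 = 0" using w(1) k by (auto simp: Xprime_def hmap_eq fmap_def)
    moreover have "t = 0" using calculation by auto
    moreover have "v1 = 0" using calculation by simp
    ultimately show "p \<in> X \<and> (v1,v2,v3) \<in> sideA \<and> 0 \<le> t \<and> t \<le> 1"
      using w assms(5) by (auto simp: relfr_simplexT sideA_eq)
  qed
  have sB: "?X' \<inter> fst -` b \<subseteq> ?X' \<inter> (X \<times> sideB \<times> {0..1})"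
  proof (clarsimp)
    fix p v1 v2 v3 t assume w: "(p, (v1,v2,v3), t) \<in> ?X'" "p \<in> b"
    have k: "kappa b a b c p = 0" using zero w(2) assms(12) by blast
    have "(1-t) * v2 \<ge> 0" "v2 \<ge> 0" "t \<in> {0..1}" "(v1,v2,v3) \<in> rel_frontier simplexT"
      using w(1) by (auto simp: Xprime_def relfr_simplexT)
    moreover have "(1-t) * v2 + t/3 = 0" using w(1) k by (auto simp: Xprime_def hmap_eq fmap_def)
    moreover have "t = 0" using calculation by auto
    moreover have "v2 = 0" using calculation by simp
    ultimately show "p \<in> X \<and> (v1,v2,v3) \<in> sideB \<and> 0 \<le> t \<and> t \<le> 1"
      using w assms(6) by (auto simp: relfr_simplexT sideB_eq)
  qed
  have sC: "?X' \<inter> fst -` c \<subseteq> ?X' \<inter> (X \<times> sideC \<times> {0..1})"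
  proof (clarsimp)
    fix p v1 v2 v3 t assume w: "(p, (v1,v2,v3), t) \<in> ?X'" "p \<in> c"
    have k: "kappa c a b c p = 0" using zero w(2) assms(13) by blast
    have "(1-t) * v3 \<ge> 0" "v3 \<ge> 0" "t \<in> {0..1}" "(v1,v2,v3) \<in> rel_frontier simplexT"
      using w(1) by (auto simp: Xprime_def relfr_simplexT)
    moreover have "(1-t) * v3 + t/3 = 0" using w(1) k by (auto simp: Xprime_def hmap_eq fmap_def)
    moreover have "t = 0" using calculation by auto
    moreover have "v3 = 0" using calculation by simp
    ultimately show "p \<in> X \<and> (v1,v2,v3) \<in> sideC \<and> 0 \<le> t \<and> t \<le> 1"
      using w assms(7) by (auto simp: relfr_simplexT sideC_eq)
  qed
  have inter: "(?X' \<inter> (X \<times> sideA \<times> {0..1})) \<inter> (?X' \<inter> (X \<times> sideB \<times> {0..1}))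
        \<inter> (?X' \<inter> (X \<times> sideC \<times> {0..1})) = {}"
    by (auto simp: sideA_eq sideB_eq sideC_eq)
  have un: "(?X' \<inter> (X \<times> sideA \<times> {0..1})) \<union> (?X' \<inter> (X \<times> sideB \<times> {0..1}))
        \<union> (?X' \<inter> (X \<times> sideC \<times> {0..1})) = ?X'"
    by (auto simp: Xprime_def relfr_sides)
  have ne: "?X' \<noteq> {}" using surj assms(3) by auto
  show ?thesis
  proof (intro conjI ballI)
    fix p assume "p \<in> X" then show "connected {w \<in> ?X'. fst w = p}" by (rule fib)
  qed (fact cpt conn ne cm surj sA sB sC inter un cfst)+
qed

end
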